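(* Let $\varphi$ be a Boolean formula in 3-CNF with $m$ clauses and $n$ variables, and let $G$ be the graph constructed from $\varphi$ as described in the context, with $k = 14m+3n$. Then $\varphi$ is satisfiable if and only if $\mathrm{vc}(G)\le k$.
   Context: Let $\varphi$ consist of clauses $C_1,\dots,C_m$ over variables $x_1,\dots,x_n$, each clause containing exactly three literals, $C_i=(L_i^1\vee L_i^2\vee L_i^3)$. The graph $G$ has vertex set $\{u_{r,s,i}: r\in\{1,2,3\}, s\in\{1,\dots,7\}, i\in\{1,\dots,m\}\}\cup\{v_{r,s,j}: r\in\{1,2\}, s\in\{1,2,3\}, j\in\{1,\dots,n\}\}$ and edge set consisting of: $\{u_{r,s,i},u_{r',s',i}\}$ for all $r\ne r'$ in $\{1,2,3\}$, all $s,s'\in\{1,\dots,7\}$, all $i$; $\{v_{1,s,j},v_{2,s',j}\}$ for all $s,s'\in\{1,2,3\}$, all $j$; $\{u_{r,s,i},v_{1,s',j}\}$ for all $s\in\{1,\dots,7\}$, $s'\in\{1,2,3\}$ whenever $L_i^r = x_j$; and $\{u_{r,s,i},v_{2,s',j}\}$ for all $s\in\{1,\dots,7\}$, $s'\in\{1,2,3\}$ whenever $L_i^r=\neg x_j$. $\mathrm{vc}(G)$ is the minimum size of a vertex cover of $G$ (a set of vertices containing at least one endpoint of every edge). *)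

theory Defs
  imports Main
begin

datatype lit = Pos nat | Neg nat

type_synonym clause = "lit \<times> lit \<times> lit"

fun lit_var :: "lit \<Rightarrow> nat" where
  "lit_var (Pos j) = j" | "lit_var (Neg j) = j"

fun lit_val :: "(nat \<Rightarrow> bool) \<Rightarrow> lit \<Rightarrow> bool" where
  "lit_val a (Pos j) = a j" | "lit_val a (Neg j) = (\<not> a j)"

text \<open>The r-th literal (r in {1,2,3}) of the i-th clause (i in {1..m}).\<close>
definition L :: "clause list \<Rightarrow> nat \<Rightarrow> nat \<Rightarrow> lit" where
  "L cs i r = (let (a, b, c) = cs ! (i - 1) in if r = 1 then a else if r = 2 then b else c)"

definition wf_3cnf :: "nat \<Rightarrow> clause list \<Rightarrow> bool" where
  "wf_3cnf n cs = (\<forall>i\<in>{1..length cs}. \<forall>r\<in>{1,2,3::nat}. lit_var (L cs i r) \<in> {1..n})"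

definition satisfiable :: "clause list \<Rightarrow> bool" where
  "satisfiable cs = (\<exists>a. \<forall>i\<in>{1..length cs}. \<exists>r\<in>{1,2,3::nat}. lit_val a (L cs i r))"

datatype vertex = U nat nat nat | V nat nat nat

definition verts :: "nat \<Rightarrow> clause list \<Rightarrow> vertex set" where
  "verts n cs = {U r s i | r s i. r \<in> {1,2,3} \<and> s \<in> {1..7} \<and> i \<in> {1..length cs}}
              \<union> {V r s j | r s j. r \<in> {1,2} \<and> s \<in> {1,2,3} \<and> j \<in> {1..n}}"

definition edges :: "nat \<Rightarrow> clause list \<Rightarrow> vertex set set" where
  "edges n cs =
     {{U r s i, U r' s' i} | r r' s s' i. r \<in> {1,2,3} \<and> r' \<in> {1,2,3} \<and> r \<noteq> r'
          \<and> s \<in> {1..7} \<and> s' \<in> {1..7} \<and> i \<in> {1..length cs}}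
   \<union> {{V 1 s j, V 2 s' j} | s s' j. s \<in> {1,2,3} \<and> s' \<in> {1,2,3} \<and> j \<in> {1..n}}
   \<union> {{U r s i, V 1 s' j} | r s s' i j. r \<in> {1,2,3} \<and> s \<in> {1..7} \<and> s' \<in> {1,2,3}
          \<and> i \<in> {1..length cs} \<and> j \<in> {1..n} \<and> L cs i r = Pos j}
   \<union> {{U r s i, V 2 s' j} | r s s' i j. r \<in> {1,2,3} \<and> s \<in> {1..7} \<and> s' \<in> {1,2,3}
          \<and> i \<in> {1..length cs} \<and> j \<in> {1..n} \<and> L cs i r = Neg j}"

definition is_vertex_cover :: "'v set \<Rightarrow> 'v set set \<Rightarrow> 'v set \<Rightarrow> bool" where
  "is_vertex_cover Vs E C = (C \<subseteq> Vs \<and> (\<forall>e\<in>E. e \<inter> C \<noteq> {}))"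

text \<open>Minimum size of a vertex cover (the graph is finite, Vs itself is a cover).\<close>
definition vc :: "'v set \<Rightarrow> 'v set set \<Rightarrow> nat" where
  "vc Vs E = Min {card C | C. is_vertex_cover Vs E C}"

end

theory Submission
  imports Defs
begin

definition UB :: "nat \<Rightarrow> vertex set" where
  "UB i = (\<lambda>(r,s). U r s i) ` ({1,2,3} \<times> {1..7})"

definition VB :: "nat \<Rightarrow> vertex set" where
  "VB j = (\<lambda>(r,s). V r s j) ` ({1,2} \<times> {1,2,3})"

lemma finite_UB[simp]: "finite (UB i)" unfolding UB_def by auto
lemma finite_VB[simp]: "finite (VB j)" unfolding VB_def by auto

lemma card_part: "card ((\<lambda>s. U r s i) ` {1..7::nat}) = 7"
  by (subst card_image) (auto intro: inj_onI)

lemma clause_lb: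
  assumes cov: "\<And>r r' s s'. r\<in>{1,2,3} \<Longrightarrow> r'\<in>{1,2,3} \<Longrightarrow> r\<noteq>r' \<Longrightarrow> s\<in>{1..7} \<Longrightarrow> s'\<in>{1..7}
      \<Longrightarrow> U r s i \<in> C \<or> U r' s' i \<in> C"
    and fin: "finite C"
  shows "14 \<le> card (C \<inter> UB i) \<and> (card (C \<inter> UB i) \<le> 14 \<longrightarrow> (\<exists>r\<in>{1,2,3::nat}. \<forall>s\<in>{1..7}. U r s i \<notin> C))"
proof -
  define P where "P r = (\<lambda>s. U r s i) ` {1..7::nat}" for r
  have cP: "card (P r) = 7" for r unfolding P_def by (rule card_part)
  have two: "card (P r' \<union> P r'') = 14" if "r' \<noteq> r''" for r' r''
    using that cP by (subst card_Un_disjoint) (auto simp: P_def)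
  have PU: "P r \<subseteq> UB i" if "r \<in> {1,2,3}" for r using that unfolding P_def UB_def by auto
  have fin2: "finite (C \<inter> UB i)" using fin by auto
  show ?thesis
  proof (cases "\<exists>r\<in>{1,2,3::nat}. \<exists>s\<in>{1..7}. U r s i \<notin> C")
    case True
    then obtain r s where r: "r \<in> {1,2,3::nat}" and s: "s\<in>{1..7}" "U r s i \<notin> C" by blast
    obtain r' r'' where rr: "r'\<in>{1,2,3::nat}" "r''\<in>{1,2,3::nat}" "r\<noteq>r'" "r\<noteq>r''" "r'\<noteq>r''"
      using r(1) by (metis insertCI numeral_eq_iff semiring_norm(83) semiring_norm(86) semiring_norm(89) one_eq_numeral_iff)
    have full: "P q \<subseteq> C \<inter> UB i" if "q \<in> {1,2,3}" "q \<noteq> r" for q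
      using cov[of r q s] s that PU[of q] r(1) unfolding P_def by auto
    have sub: "P r' \<union> P r'' \<subseteq> C \<inter> UB i" using full rr by auto
    have ge: "14 \<le> card (C \<inter> UB i)" using card_mono[OF fin2 sub] two[OF rr(5)] by simp
    show ?thesis
    proof (cases "\<exists>t\<in>{1..7}. U r t i \<in> C")
      case True
      then obtain t where t: "t\<in>{1..7}" "U r t i \<in> C" by auto
      have "U r t i \<notin> P r' \<union> P r''" using rr unfolding P_def by auto
      moreover have "insert (U r t i) (P r' \<union> P r'') \<subseteq> C \<inter> UB i"
        using sub t r(1) unfolding UB_def by auto
      ultimately have "15 \<le> card (C \<inter> UB i)"
        using card_mono[OF fin2, of "insert (U r t i) (P r' \<union> P r'')"] two[OF rr(5)]
        by (simp add: P_def)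
      then show ?thesis by simp
    next
      case False
      then show ?thesis using ge r(1) by blast
    qed
  next
    case False
    then have "P q \<subseteq> C \<inter> UB i" if "q \<in> {1,2,3}" for q using that PU[OF that] unfolding P_def by auto
    then have sub: "P 1 \<union> P 2 \<union> P 3 \<subseteq> C \<inter> UB i" by auto
    have "card (P 1 \<union> P 2 \<union> P 3) = 21"
      using cP two[of 1 2] by (subst card_Un_disjoint) (auto simp: P_def)
    then have "21 \<le> card (C \<inter> UB i)" using card_mono[OF fin2 sub] by simp
    then show ?thesis by simp
  qed
qed

lemma var_lb:
  assumes cov: "\<And>s s'. s\<in>{1,2,3} \<Longrightarrow> s'\<in>{1,2,3} \<Longrightarrow> V 1 s j \<in> C \<or> V 2 s' j \<in> C"
    and fin: "finite C"
  shows "3 \<le> card (C \<inter> VB j) \<and> (card (C \<inter> VB j) \<le> 3 \<longrightarrow>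
     \<not> ((\<forall>s\<in>{1,2,3::nat}. V 1 s j \<in> C) \<and> (\<forall>s\<in>{1,2,3::nat}. V 2 s j \<in> C)))"
proof -
  define Q where "Q r = (\<lambda>s. V r s j) ` {1,2,3::nat}" for r
  have cQ: "card (Q r) = 3" for r unfolding Q_def by (subst card_image) (auto intro: inj_onI)
  have fin2: "finite (C \<inter> VB j)" using fin by auto
  have QV: "Q r \<subseteq> VB j" if "r \<in> {1,2}" for r using that unfolding Q_def VB_def by auto
  have "Q 1 \<subseteq> C \<or> Q 2 \<subseteq> C"
  proof (cases "Q 1 \<subseteq> C")
    case False
    then obtain s where s: "s \<in> {1,2,3::nat}" "V 1 s j \<notin> C" unfolding Q_def by blast
    have "V 2 s' j \<in> C" if "s' \<in> {1,2,3}" for s' using cov[OF s(1) that] s(2) by blast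
    then show ?thesis unfolding Q_def by blast
  qed simp
  then obtain r where "r \<in> {1,2::nat}" "Q r \<subseteq> C" by blast
  then have "Q r \<subseteq> C \<inter> VB j" using QV by auto
  then have ge: "3 \<le> card (C \<inter> VB j)" using card_mono[OF fin2] cQ by metis
  have "6 \<le> card (C \<inter> VB j)" if "\<forall>s\<in>{1,2,3::nat}. V 1 s j \<in> C" "\<forall>s\<in>{1,2,3::nat}. V 2 s j \<in> C"
  proof -
    have sub: "Q 1 \<union> Q 2 \<subseteq> C \<inter> VB j" using that QV unfolding Q_def by auto
    have "card (Q 1 \<union> Q 2) = 6" using cQ by (subst card_Un_disjoint) (auto simp: Q_def)
    then show ?thesis using card_mono[OF fin2 sub] by simp
  qed
  then show ?thesis using ge by auto
qed

lemma finite_verts: "finite (verts n cs)"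
proof -
  have "verts n cs \<subseteq> (\<lambda>(r,s,i). U r s i) ` ({1,2,3} \<times> {1..7} \<times> {1..length cs})
      \<union> (\<lambda>(r,s,j). V r s j) ` ({1,2} \<times> {1,2,3} \<times> {1..n})"
  proof
    fix x assume "x \<in> verts n cs"
    then consider (u) r s i where "x = U r s i" "r \<in> {1,2,3::nat}" "s \<in> {1..7::nat}" "i \<in> {1..length cs}"
      | (v) r s i where "x = V r s i" "r \<in> {1,2::nat}" "s \<in> {1,2,3::nat}" "i \<in> {1..n}"
      unfolding verts_def by blast
    then show "x \<in> (\<lambda>(r,s,i). U r s i) ` ({1,2,3} \<times> {1..7} \<times> {1..length cs})
      \<union> (\<lambda>(r,s,j). V r s j) ` ({1,2} \<times> {1,2,3} \<times> {1..n})"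
    proof cases
      case u
      then have "x \<in> (\<lambda>(r,s,i). U r s i) ` ({1,2,3} \<times> {1..7} \<times> {1..length cs})"
        by (intro image_eqI[where x="(r,s,i)"]) auto
      then show ?thesis by blast
    next
      case v
      then have "x \<in> (\<lambda>(r,s,j). V r s j) ` ({1,2} \<times> {1,2,3} \<times> {1..n})"
        by (intro image_eqI[where x="(r,s,i)"]) auto
      then show ?thesis by blast
    qed
  qed
  then show ?thesis by (rule finite_subset) auto
qed

lemma finite_covers: "finite Vs \<Longrightarrow> finite {card C | C. is_vertex_cover Vs E C}"
proof -
  assume "finite Vs"
  have "{card C | C. is_vertex_cover Vs E C} \<subseteq> card ` Pow Vs"
    by (auto simp: is_vertex_cover_def)
  then show ?thesis using \<open>finite Vs\<close> by (meson finite_Pow_iff finite_imageI finite_subset)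
qed

lemma sum_tight:
  fixes f :: "'a \<Rightarrow> nat"
  assumes "finite I" "finite J" "\<And>i. i \<in> I \<Longrightarrow> a \<le> f i" "\<And>j. j \<in> J \<Longrightarrow> b \<le> g j"
    and "sum f I + sum g J \<le> a * card I + b * card J"
  shows "\<forall>i\<in>I. f i \<le> a" "\<forall>j\<in>J. g j \<le> b"
proof -
  have "sum f I = sum (\<lambda>i. a + (f i - a)) I" using assms(3) by (intro sum.cong) auto
  also have "\<dots> = a * card I + sum (\<lambda>i. f i - a) I" by (simp add: sum.distrib)
  finally have 1: "sum f I = a * card I + sum (\<lambda>i. f i - a) I" .
  have "sum g J = sum (\<lambda>i. b + (g i - b)) J" using assms(4) by (intro sum.cong) auto
  also have "\<dots> = b * card J + sum (\<lambda>i. g i - b) J" by (simp add: sum.distrib)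
  finally have 2: "sum g J = b * card J + sum (\<lambda>i. g i - b) J" .
  have "sum (\<lambda>i. f i - a) I = 0" "sum (\<lambda>i. g i - b) J = 0" using 1 2 assms(5) by auto
  then show "\<forall>i\<in>I. f i \<le> a" "\<forall>j\<in>J. g j \<le> b" using assms(1,2) by auto
qed

lemma edge_UU: "r\<in>{1,2,3} \<Longrightarrow> r'\<in>{1,2,3} \<Longrightarrow> r\<noteq>r' \<Longrightarrow> s\<in>{1..7} \<Longrightarrow> s'\<in>{1..7}
   \<Longrightarrow> i\<in>{1..length cs} \<Longrightarrow> {U r s i, U r' s' i} \<in> edges n cs"
  unfolding edges_def by (rule UnI1, rule UnI1, rule UnI1) (rule CollectI, intro exI conjI, rule refl, auto)

lemma edge_VV: "s\<in>{1,2,3} \<Longrightarrow> s'\<in>{1,2,3} \<Longrightarrow> j\<in>{1..n} \<Longrightarrow> {V 1 s j, V 2 s' j} \<in> edges n cs"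
  unfolding edges_def by (rule UnI1, rule UnI1, rule UnI2) (rule CollectI, intro exI conjI, rule refl, auto)

lemma edge_UP: "r\<in>{1,2,3} \<Longrightarrow> s\<in>{1..7} \<Longrightarrow> s'\<in>{1,2,3} \<Longrightarrow> i\<in>{1..length cs} \<Longrightarrow> j\<in>{1..n}
   \<Longrightarrow> L cs i r = Pos j \<Longrightarrow> {U r s i, V 1 s' j} \<in> edges n cs"
  unfolding edges_def by (rule UnI1, rule UnI2) (rule CollectI, intro exI conjI, rule refl, auto)

lemma edge_UN: "r\<in>{1,2,3} \<Longrightarrow> s\<in>{1..7} \<Longrightarrow> s'\<in>{1,2,3} \<Longrightarrow> i\<in>{1..length cs} \<Longrightarrow> j\<in>{1..n}
   \<Longrightarrow> L cs i r = Neg j \<Longrightarrow> {U r s i, V 2 s' j} \<in> edges n cs"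
  unfolding edges_def by (rule UnI2) (rule CollectI, intro exI conjI, rule refl, auto)

lemma cover_edge: "is_vertex_cover Vs E C \<Longrightarrow> {x, y} \<in> E \<Longrightarrow> x \<in> C \<or> y \<in> C"
  unfolding is_vertex_cover_def by auto

lemma verts_cover: "is_vertex_cover (verts n cs) (edges n cs) (verts n cs)"
  unfolding is_vertex_cover_def
proof (intro conjI ballI subset_refl)
  fix e assume "e \<in> edges n cs"
  then obtain x y where "e = {x, y}" "x \<in> verts n cs"
    unfolding edges_def verts_def by blast
  then show "e \<inter> verts n cs \<noteq> {}" by auto
qed

lemma decomp:
  assumes "finite C"
  shows "(\<Sum>i\<in>{1..m}. card (C \<inter> UB i)) + (\<Sum>j\<in>{1..n}. card (C \<inter> VB j)) \<le> card C"
proof -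
  have dU: "(\<Sum>i\<in>{1..m}. card (C \<inter> UB i)) = card (\<Union>i\<in>{1..m}. C \<inter> UB i)"
    using assms by (subst card_UN_disjoint) (auto simp: UB_def)
  have dV: "(\<Sum>j\<in>{1..n}. card (C \<inter> VB j)) = card (\<Union>j\<in>{1..n}. C \<inter> VB j)"
    using assms by (subst card_UN_disjoint) (auto simp: VB_def)
  have "card (\<Union>i\<in>{1..m}. C \<inter> UB i) + card (\<Union>j\<in>{1..n}. C \<inter> VB j)
      = card ((\<Union>i\<in>{1..m}. C \<inter> UB i) \<union> (\<Union>j\<in>{1..n}. C \<inter> VB j))"
    using assms by (subst card_Un_disjoint) (auto simp: UB_def VB_def)
  also have "\<dots> \<le> card C" using assms by (intro card_mono) auto
  finally show ?thesis using dU dV by simp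
qed

theorem lemma13:
  fixes n :: nat and cs :: "clause list"
  assumes "wf_3cnf n cs"
  shows "satisfiable cs \<longleftrightarrow> vc (verts n cs) (edges n cs) \<le> 14 * length cs + 3 * n"
proof
  assume "satisfiable cs"
  then obtain a where sat: "\<forall>i\<in>{1..length cs}. \<exists>r\<in>{1,2,3::nat}. lit_val a (L cs i r)"
    unfolding satisfiable_def by blast
  define p where "p i = (SOME r. r\<in>{1,2,3::nat} \<and> lit_val a (L cs i r))" for i
  have p: "p i \<in> {1,2,3} \<and> lit_val a (L cs i (p i))" if "i \<in> {1..length cs}" for i
    unfolding p_def using sat that by (metis (mono_tags, lifting) someI_ex)
  define CU where "CU i = (\<lambda>(r,s). U r s i) ` (({1,2,3} - {p i}) \<times> {1..7::nat})" for i
  define CV where "CV j = (\<lambda>s. V (if a j then 1 else 2) s j) ` {1,2,3::nat}" for j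
  define C where "C = (\<Union>i\<in>{1..length cs}. CU i) \<union> (\<Union>j\<in>{1..n}. CV j)"
  have memU: "U r s i \<in> C" if "r\<in>{1,2,3}" "r \<noteq> p i" "s\<in>{1..7}" "i\<in>{1..length cs}" for r s i
  proof -
    have "U r s i \<in> CU i" unfolding CU_def using that by (intro image_eqI[where x="(r,s)"]) auto
    then show ?thesis unfolding C_def using that by blast
  qed
  have memV: "V (if a j then 1 else 2) s j \<in> C" if "s\<in>{1,2,3}" "j\<in>{1..n}" for s j
    unfolding C_def CV_def using that by blast
  have cov: "is_vertex_cover (verts n cs) (edges n cs) C"
    unfolding is_vertex_cover_def
  proof (intro conjI ballI)
    show "C \<subseteq> verts n cs"
      unfolding C_def CU_def CV_def verts_def by (auto split: if_splits)
  next
    fix e assume "e \<in> edges n cs"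
    then consider
        (uu) r r' s s' i where "e = {U r s i, U r' s' i}" "r \<in> {1,2,3}" "r' \<in> {1,2,3}" "r \<noteq> r'"
          "s \<in> {1..7}" "s' \<in> {1..7}" "i \<in> {1..length cs}"
      | (vv) s s' j where "e = {V 1 s j, V 2 s' j}" "s \<in> {1,2,3}" "s' \<in> {1,2,3}" "j \<in> {1..n}"
      | (up) r s s' i j where "e = {U r s i, V 1 s' j}" "r \<in> {1,2,3}" "s \<in> {1..7}" "s' \<in> {1,2,3}"
          "i \<in> {1..length cs}" "j \<in> {1..n}" "L cs i r = Pos j"
      | (un) r s s' i j where "e = {U r s i, V 2 s' j}" "r \<in> {1,2,3}" "s \<in> {1..7}" "s' \<in> {1,2,3}"
          "i \<in> {1..length cs}" "j \<in> {1..n}" "L cs i r = Neg j"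
      unfolding edges_def by blast
    then show "e \<inter> C \<noteq> {}"
    proof cases
      case uu
      show ?thesis
      proof (cases "r = p i")
        case True
        then have "U r' s' i \<in> C" using uu memU[where r=r' and s=s' and i=i] by auto
        then show ?thesis using uu(1) by auto
      next
        case False
        then have "U r s i \<in> C" using uu memU[where r=r and s=s and i=i] by auto
        then show ?thesis using uu(1) by auto
      qed
    next
      case vv
      then show ?thesis using memV[where s=s and j=j] memV[where s=s' and j=j] by (cases "a j") auto
    next
      case up
      show ?thesis
      proof (cases "r = p i")
        case True
        then have "a j" using p[OF up(5)] up(7) by simp
        then show ?thesis using memV[where s=s' and j=j] up by auto
      next
        case False
        then show ?thesis using memU[where r=r and s=s and i=i] up by auto
      qed
    next
      case un
      show ?thesis
      proof (cases "r = p i")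
        case True
        then have "\<not> a j" using p[OF un(5)] un(7) by simp
        then show ?thesis using memV[where s=s' and j=j] un by auto
      qed (use memU[where r=r and s=s and i=i] un in auto)
    qed
  qed
  have cCU: "card (CU i) \<le> 14" if "i \<in> {1..length cs}" for i
  proof -
    have "card (CU i) \<le> card (({1,2,3} - {p i}) \<times> {1..7::nat})"
      unfolding CU_def by (rule card_image_le) auto
    also have "\<dots> = 14" using p[OF that] by auto
    finally show ?thesis .
  qed
  have cCV: "card (CV j) \<le> 3" for j
    unfolding CV_def by (rule order.trans[OF card_image_le]) auto
  have "card C \<le> card (\<Union>i\<in>{1..length cs}. CU i) + card (\<Union>j\<in>{1..n}. CV j)"
    unfolding C_def by (rule card_Un_le)
  also have "\<dots> \<le> (\<Sum>i\<in>{1..length cs}. card (CU i)) + (\<Sum>j\<in>{1..n}. card (CV j))"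
    by (intro add_mono card_UN_le) auto
  also have "\<dots> \<le> (\<Sum>i\<in>{1..length cs}. 14) + (\<Sum>j\<in>{1..n}. 3)"
    using cCU cCV by (intro add_mono sum_mono) auto
  finally have cC: "card C \<le> 14 * length cs + 3 * n" by simp
  have "vc (verts n cs) (edges n cs) \<le> card C"
    unfolding vc_def using cov by (intro Min_le finite_covers finite_verts) auto
  then show "vc (verts n cs) (edges n cs) \<le> 14 * length cs + 3 * n" using cC by simp
next
  assume le: "vc (verts n cs) (edges n cs) \<le> 14 * length cs + 3 * n"
  let ?S = "{card C | C. is_vertex_cover (verts n cs) (edges n cs) C}"
  have "vc (verts n cs) (edges n cs) \<in> ?S"
    unfolding vc_def using finite_covers[OF finite_verts] verts_cover[of n cs] by (intro Min_in) auto
  then obtain C where cov: "is_vertex_cover (verts n cs) (edges n cs) C"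
    and cC: "card C = vc (verts n cs) (edges n cs)" by auto
  have finC: "finite C" using cov finite_verts unfolding is_vertex_cover_def by (metis finite_subset)
  have cl: "14 \<le> card (C \<inter> UB i) \<and> (card (C \<inter> UB i) \<le> 14 \<longrightarrow> (\<exists>r\<in>{1,2,3::nat}. \<forall>s\<in>{1..7}. U r s i \<notin> C))"
    if "i \<in> {1..length cs}" for i
    by (rule clause_lb[OF _ finC]) (rule cover_edge[OF cov], rule edge_UU, use that in auto)
  have vl: "3 \<le> card (C \<inter> VB j) \<and> (card (C \<inter> VB j) \<le> 3 \<longrightarrow>
     \<not> ((\<forall>s\<in>{1,2,3::nat}. V 1 s j \<in> C) \<and> (\<forall>s\<in>{1,2,3::nat}. V 2 s j \<in> C)))"
    if "j \<in> {1..n}" for j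
    by (rule var_lb[OF _ finC]) (rule cover_edge[OF cov], rule edge_VV, use that in auto)
  have tight: "\<forall>i\<in>{1..length cs}. card (C \<inter> UB i) \<le> 14" "\<forall>j\<in>{1..n}. card (C \<inter> VB j) \<le> 3"
    using sum_tight[of "{1..length cs}" "{1..n}" 14 "\<lambda>i. card (C \<inter> UB i)" 3 "\<lambda>j. card (C \<inter> VB j)"]
      cl vl decomp[OF finC, of "length cs" n] le cC by auto
  define a where "a j = (\<forall>s\<in>{1,2,3::nat}. V 1 s j \<in> C)" for j
  show "satisfiable cs"
    unfolding satisfiable_def
  proof (intro exI ballI)
    fix i assume i: "i \<in> {1..length cs}"
    then obtain r where r: "r \<in> {1,2,3::nat}" and free: "\<forall>s\<in>{1..7}. U r s i \<notin> C"
      using cl[OF i] tight(1) by blast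
    have j: "lit_var (L cs i r) \<in> {1..n}" using assms i r unfolding wf_3cnf_def by blast
    have "lit_val a (L cs i r)"
    proof (cases "L cs i r")
      case (Pos j)
      then have "j \<in> {1..n}" using j by simp
      then have "V 1 s' j \<in> C" if "s' \<in> {1,2,3}" for s'
        using cover_edge[OF cov edge_UP[OF r _ that i _ Pos, of 1]] free by auto
      then show ?thesis using Pos unfolding a_def by simp
    next
      case (Neg j)
      then have jn: "j \<in> {1..n}" using j by simp
      then have "V 2 s' j \<in> C" if "s' \<in> {1,2,3}" for s'
        using cover_edge[OF cov edge_UN[OF r _ that i _ Neg, of 1]] free by auto
      then show ?thesis using Neg vl[OF jn] tight(2) jn unfolding a_def by auto
    qed
    then show "\<exists>r\<in>{1,2,3}. lit_val a (L cs i r)" using r by blast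
  qed
qed

end
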